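(* Assume $\alpha_1\ge0$, $\alpha_2\ge0$, $\alpha_1+\alpha_2>0$, $\beta_1\ge0$, $\beta_2\ge0$, $\lambda>0$, and consider searching on a line with costs $\mathrm{cost}_1(x)=\alpha_1x+\beta_1$, $\mathrm{cost}_2(y)=\alpha_2y+\beta_2$. Write $u=(\alpha_1+\alpha_2)\lambda$, $a=\frac{3\beta_1+2\beta_2}{2u}$ and $b=\frac{\beta_1+\beta_2}{u}$. (i) If $a\le1$, the periodic strategy with distances $$x_i=\Big(\big((1-a)\,i+(1+b)\big)2^i-b\Big)\lambda$$ is optimal and has competitive ratio $5\alpha_1+4\alpha_2$. (ii) If $a\ge1$, let $$\Phi=1+\left(\frac{2\beta_1+\beta_2-u+\sqrt{(2\beta_1+\beta_2)^2-\beta_2^2+(\beta_2+u)^2}}{2u}\right)^{-1}.$$ Then the periodic strategy with distances $x_i=\big((1+b)\Phi^i-b\big)\lambda$ is optimal and has competitive ratio $$\frac{(\alpha_1+\alpha_2)x_1+(\beta_1+\beta_2)+(\alpha_1\lambda+\beta_1)}{\lambda}.$$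
   Context: Searching on a line with general costs. Fix $\lambda>0$. A search strategy is a sequence $\mathcal S(i)=(x_i,r_i)$, $i\ge 1$, with $x_i>0$ and $r_i\in\{\mathrm{left},\mathrm{right}\}$, such that $\sup\{x_i: r_i=\mathrm{left}\}=\sup\{x_i:r_i=\mathrm{right}\}=\infty$. At step $i$ the searcher, starting at the origin, walks distance $x_i$ along ray $r_i$ and, if the target has not been found, walks back to the origin. The target lies on one of the two rays at an unknown distance $D\ge\lambda$ from the origin ($\lambda$ is known to the searcher); it is found at the first step $j$ such that $r_j$ is the target's ray and $x_j\ge D$. Walking distance $x$ away from the origin costs $\mathrm{cost}_1(x)=\alpha_1x+\beta_1$ and walking distance $y$ back towards the origin costs $\mathrm{cost}_2(y)=\alpha_2y+\beta_2$, so the total cost when the target is found at step $j$ is $\sum_{i=1}^{j-1}\big(\mathrm{cost}_1(x_i)+\mathrm{cost}_2(x_i)\big)+\mathrm{cost}_1(D)$. The competitive ratio $CR(\mathcal S)$ is the supremum, over all target positions (either ray, any $D\ge\lambda$), of the total cost divided by $D$. A strategy is optimal if its competitive ratio is minimum among all search strategies. A periodic strategy with distances $x_i$ means $r_1\ne r_2$ and $r_{i+2}=r_i$ for all $i\ge1$. For a periodic strategy with increasing distances the competitive ratio is $\max\Big\{\frac{(\alpha_1+\alpha_2)x_1+\beta_1+\beta_2+\alpha_1\lambda+\beta_1}{\lambda},\ \sup_{n\ge1}\frac{\sum_{i=1}^{n+1}\big((\alpha_1+\alpha_2)x_i+\beta_1+\beta_2\big)+\alpha_1x_n+\beta_1}{x_n}\Big\}$.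 *)

theory Defs
  imports "HOL-Analysis.Analysis" "HOL-Library.Extended_Real"
begin

text \<open>A search strategy is given by distances x i and rays r i for i \<ge> 1
  (the values at index 0 are ignored). Rays are encoded as booleans:
  True = right, False = left.\<close>

definition search_strategy :: "(nat \<Rightarrow> real) \<Rightarrow> (nat \<Rightarrow> bool) \<Rightarrow> bool" where
  "search_strategy x r \<longleftrightarrow>
     (\<forall>i\<ge>1. x i > 0) \<and>
     (\<forall>M. \<exists>i\<ge>1. r i \<and> x i > M) \<and>
     (\<forall>M. \<exists>i\<ge>1. \<not> r i \<and> x i > M)"

definition find_step :: "(nat \<Rightarrow> real) \<Rightarrow> (nat \<Rightarrow> bool) \<Rightarrow> bool \<Rightarrow> real \<Rightarrow> nat" where
  "find_step x r s D = (LEAST j. j \<ge> 1 \<and> r j = s \<and> x j \<ge> D)"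

definition search_cost ::
  "real \<Rightarrow> real \<Rightarrow> real \<Rightarrow> real \<Rightarrow> (nat \<Rightarrow> real) \<Rightarrow> (nat \<Rightarrow> bool) \<Rightarrow> bool \<Rightarrow> real \<Rightarrow> real" where
  "search_cost \<alpha>1 \<beta>1 \<alpha>2 \<beta>2 x r s D =
     (\<Sum>i\<in>{1..<find_step x r s D}. (\<alpha>1 * x i + \<beta>1) + (\<alpha>2 * x i + \<beta>2)) + (\<alpha>1 * D + \<beta>1)"

definition comp_ratio ::
  "real \<Rightarrow> real \<Rightarrow> real \<Rightarrow> real \<Rightarrow> real \<Rightarrow> (nat \<Rightarrow> real) \<Rightarrow> (nat \<Rightarrow> bool) \<Rightarrow> ereal" where
  "comp_ratio \<alpha>1 \<beta>1 \<alpha>2 \<beta>2 lam x r =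
     (SUP p \<in> {p :: bool \<times> real. snd p \<ge> lam}.
        ereal (search_cost \<alpha>1 \<beta>1 \<alpha>2 \<beta>2 x r (fst p) (snd p) / snd p))"

definition optimal_strategy ::
  "real \<Rightarrow> real \<Rightarrow> real \<Rightarrow> real \<Rightarrow> real \<Rightarrow> (nat \<Rightarrow> real) \<Rightarrow> (nat \<Rightarrow> bool) \<Rightarrow> bool" where
  "optimal_strategy \<alpha>1 \<beta>1 \<alpha>2 \<beta>2 lam x r \<longleftrightarrow>
     search_strategy x r \<and>
     (\<forall>x' r'. search_strategy x' r' \<longrightarrow>
        comp_ratio \<alpha>1 \<beta>1 \<alpha>2 \<beta>2 lam x r \<le> comp_ratio \<alpha>1 \<beta>1 \<alpha>2 \<beta>2 lam x' r')"

definition periodic_rays :: "(nat \<Rightarrow> bool) \<Rightarrow> bool" where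
  "periodic_rays r \<longleftrightarrow> r 1 \<noteq> r 2 \<and> (\<forall>i\<ge>1. r (i + 2) = r i)"

end

theory Submission
  imports Defs
begin


definition prodv :: "(nat \<Rightarrow> real) \<Rightarrow> (nat \<Rightarrow> bool) \<Rightarrow> real \<Rightarrow> nat \<Rightarrow> bool" where
  "prodv x r lam j \<longleftrightarrow> 1 \<le> j \<and> lam \<le> x j \<and> (\<forall>i. 1 \<le> i \<and> i < j \<and> r i = r j \<longrightarrow> x i < x j)"

definition nextp :: "(nat \<Rightarrow> real) \<Rightarrow> (nat \<Rightarrow> bool) \<Rightarrow> real \<Rightarrow> nat \<Rightarrow> nat" where
  "nextp x r lam i = (LEAST j. i < j \<and> prodv x r lam j)"

definition turn :: "(nat \<Rightarrow> real) \<Rightarrow> (nat \<Rightarrow> bool) \<Rightarrow> real \<Rightarrow> nat \<Rightarrow> bool" where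
  "turn x r lam i \<longleftrightarrow> prodv x r lam i \<and> r (nextp x r lam i) \<noteq> r i"

fun tau :: "(nat \<Rightarrow> real) \<Rightarrow> (nat \<Rightarrow> bool) \<Rightarrow> real \<Rightarrow> nat \<Rightarrow> nat" where
  "tau x r lam 0 = (LEAST i. turn x r lam i)"
| "tau x r lam (Suc k) = (LEAST i. tau x r lam k < i \<and> turn x r lam i)"

context
  fixes x :: "nat \<Rightarrow> real" and r :: "nat \<Rightarrow> bool" and lam :: real
  assumes ss: "search_strategy x r" and lam: "lam > 0"
begin

lemma ray_unb: "\<exists>i\<ge>1. r i = s \<and> x i > M"
  using ss unfolding search_strategy_def by (cases s) auto

lemma prod_exists: "\<exists>j>n. prodv x r lam j \<and> r j = s"
proof -
  define M where "M = max lam (Max (x ` {..n}))"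
  define P where "P = (\<lambda>i. 1 \<le> i \<and> r i = s \<and> x i > M)"
  have ex: "\<exists>i. P i" using ray_unb unfolding P_def by blast
  define j where "j = (LEAST i. P i)"
  have Pj: "P j" unfolding j_def using ex by (metis LeastI_ex)
  have le: "\<And>i. i < j \<Longrightarrow> \<not> P i" unfolding j_def using not_less_Least by blast
  have "j > n"
  proof (rule ccontr)
    assume "\<not> n < j"
    then have "x j \<le> Max (x ` {..n})" by (intro Max_ge) auto
    then have "x j \<le> M" unfolding M_def by linarith
    then show False using Pj unfolding P_def by auto
  qed
  moreover have "prodv x r lam j"
    unfolding prodv_def
  proof (intro conjI allI impI)
    show "1 \<le> j" "lam \<le> x j" using Pj unfolding P_def M_def by auto
    fix i assume "1 \<le> i \<and> i < j \<and> r i = r j"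
    then have "\<not> x i > M" using le[of i] Pj unfolding P_def by auto
    then show "x i < x j" using Pj unfolding P_def by auto
  qed
  ultimately show ?thesis using Pj unfolding P_def by auto
qed

lemma nextp_props:
  assumes "prodv x r lam j" "i < j"
  shows "i < nextp x r lam i" "prodv x r lam (nextp x r lam i)" "nextp x r lam i \<le> j"
proof -
  have ex: "\<exists>j. i < j \<and> prodv x r lam j" using assms by blast
  show "i < nextp x r lam i" "prodv x r lam (nextp x r lam i)"
    unfolding nextp_def using LeastI_ex[OF ex] by auto
  show "nextp x r lam i \<le> j" unfolding nextp_def using assms by (intro Least_le) auto
qed

lemma chain:
  "prodv x r lam i \<Longrightarrow> prodv x r lam i' \<Longrightarrow> i \<le> i' \<Longrightarrow>
   (\<forall>j. i \<le> j \<and> j < i' \<longrightarrow> \<not> turn x r lam j) \<Longrightarrow> r i = r i'"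
proof (induction "i' - i" arbitrary: i rule: less_induct)
  case less
  show ?case
  proof (cases "i = i'")
    case True then show ?thesis by simp
  next
    case False
    then have lt: "i < i'" using less.prems by auto
    let ?n = "nextp x r lam i"
    have n: "i < ?n" "prodv x r lam ?n" "?n \<le> i'" using nextp_props[OF less.prems(2) lt] by auto
    have "\<not> turn x r lam i" using less.prems(4) lt by auto
    then have "r ?n = r i" using less.prems(1) unfolding turn_def by auto
    moreover have "r ?n = r i'"
      using less.hyps[of ?n] n less.prems by auto
    ultimately show ?thesis by simp
  qed
qed

lemma turn_exists: "\<exists>t>n. turn x r lam t"
proof -
  obtain p where p: "p > n" "prodv x r lam p" using prod_exists by blast
  obtain q where q: "q > p" "prodv x r lam q" "r q = (\<not> r p)" using prod_exists by blast
  have "\<exists>j. p \<le> j \<and> j < q \<and> turn x r lam j"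
  proof (rule ccontr)
    assume "\<not> ?thesis"
    then have "r p = r q" using chain[OF p(2) q(2)] q(1) by auto
    then show False using q(3) by simp
  qed
  then show ?thesis using p(1) by (meson less_le_trans)
qed

lemma tau_props:
  shows "turn x r lam (tau x r lam k)" "tau x r lam k < tau x r lam (Suc k)"
    "\<And>j. tau x r lam k < j \<Longrightarrow> j < tau x r lam (Suc k) \<Longrightarrow> \<not> turn x r lam j"
proof -
  have ex0: "\<exists>i. turn x r lam i" using turn_exists by blast
  have exS: "\<And>k. \<exists>i. tau x r lam k < i \<and> turn x r lam i" using turn_exists by blast
  show "turn x r lam (tau x r lam k)"
    by (cases k) (auto intro: LeastI_ex[OF ex0] LeastI2_ex[OF exS])
  show "tau x r lam k < tau x r lam (Suc k)"
    using LeastI_ex[OF exS[of k]] by simp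
  fix j assume "tau x r lam k < j" "j < tau x r lam (Suc k)"
  then show "\<not> turn x r lam j" using not_less_Least[of j "\<lambda>i. tau x r lam k < i \<and> turn x r lam i"] by auto
qed

lemma tau0_least: "j < tau x r lam 0 \<Longrightarrow> \<not> turn x r lam j"
  using not_less_Least[of j "turn x r lam"] by simp

lemma find_props:
  assumes "D \<ge> lam"
  shows "1 \<le> find_step x r s D" "r (find_step x r s D) = s" "D \<le> x (find_step x r s D)"
    "\<And>i. 1 \<le> i \<Longrightarrow> i < find_step x r s D \<Longrightarrow> r i = s \<Longrightarrow> x i < D"
    "prodv x r lam (find_step x r s D)"
proof -
  have ex: "\<exists>j. j \<ge> 1 \<and> r j = s \<and> x j \<ge> D" using ray_unb[of s D] by (auto intro: less_imp_le)
  let ?j = "find_step x r s D"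
  have P: "?j \<ge> 1 \<and> r ?j = s \<and> x ?j \<ge> D" unfolding find_step_def by (rule LeastI_ex[OF ex])
  then show "1 \<le> ?j" "r ?j = s" "D \<le> x ?j" by auto
  show lt: "\<And>i. 1 \<le> i \<Longrightarrow> i < ?j \<Longrightarrow> r i = s \<Longrightarrow> x i < D"
  proof -
    fix i assume "1 \<le> i" "i < ?j" "r i = s"
    from \<open>i < ?j\<close> have "\<not> (i \<ge> 1 \<and> r i = s \<and> x i \<ge> D)" unfolding find_step_def by (rule not_less_Least)
    then show "x i < D" using \<open>1 \<le> i\<close> \<open>r i = s\<close> by auto
  qed
  show "prodv x r lam ?j" unfolding prodv_def using P assms lt by force
qed

lemma lim_le: fixes C m z :: real assumes "\<forall>D>z. C \<le> m * D" shows "C \<le> m * z"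
proof (rule ccontr)
  assume c: "\<not> C \<le> m * z"
  show False
  proof (cases "m \<le> 0")
    case True
    have "C \<le> m * (z+1)" using assms by auto
    also have "\<dots> \<le> m * z" using True by (simp add: algebra_simps)
    finally show False using c by simp
  next
    case False
    define D where "D = z + (C - m*z)/(2*m)"
    have "D > z" unfolding D_def using c False by (auto intro!: divide_pos_pos)
    then have "C \<le> m * D" using assms by auto
    also have "m * D = m*z + (C - m*z)/2" unfolding D_def using False by (simp add: field_simps)
    finally have "C \<le> m*z + (C - m*z)/2" .
    then show False using c by (simp add: field_simps)
  qed
qed

lemma extract_seq:
  fixes \<alpha>1 \<alpha>2 \<beta>1 \<beta>2 R :: real
  assumes nn: "\<alpha>1 \<ge> 0" "\<alpha>2 \<ge> 0" "\<beta>1 \<ge> 0" "\<beta>2 \<ge> 0"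
    and H: "\<And>s D. D \<ge> lam \<Longrightarrow> search_cost \<alpha>1 \<beta>1 \<alpha>2 \<beta>2 x r s D \<le> R * D"
  shows "\<exists>z. (\<forall>k. z k \<ge> lam) \<and>
     ((\<alpha>1 * z 0 + \<beta>1) + (\<alpha>2 * z 0 + \<beta>2)) + (\<alpha>1 * lam + \<beta>1) \<le> R * lam \<and>
     (\<forall>k. (\<Sum>m\<le>Suc k. (\<alpha>1 * z m + \<beta>1) + (\<alpha>2 * z m + \<beta>2)) + \<alpha>1 * z k + \<beta>1 \<le> R * z k)"
proof -
  define c where "c = (\<lambda>i. (\<alpha>1 * x i + \<beta>1) + (\<alpha>2 * x i + \<beta>2))"
  let ?t = "tau x r lam"
  have xpos: "\<And>i. i \<ge> 1 \<Longrightarrow> x i > 0" using ss unfolding search_strategy_def by auto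
  have cnn: "\<And>i. i \<ge> 1 \<Longrightarrow> c i \<ge> 0" unfolding c_def using nn xpos
    by (metis add_nonneg_nonneg less_eq_real_def mult_nonneg_nonneg)
  have pt: "\<And>k. prodv x r lam (?t k)" using tau_props(1) unfolding turn_def by blast
  have t1: "\<And>k. ?t k \<ge> 1" "\<And>k. x (?t k) \<ge> lam" using pt unfolding prodv_def by auto
  have cost: "\<And>s D. search_cost \<alpha>1 \<beta>1 \<alpha>2 \<beta>2 x r s D =
      (\<Sum>i\<in>{1..<find_step x r s D}. c i) + (\<alpha>1 * D + \<beta>1)"
    unfolding search_cost_def c_def by simp
  have sm: "strict_mono ?t" using tau_props(2) by (simp add: strict_mono_Suc_iff)
  have C0: "c (?t 0) + (\<alpha>1 * lam + \<beta>1) \<le> R * lam"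
  proof -
    let ?s = "\<not> r (?t 0)"
    let ?j = "find_step x r ?s lam"
    have fj: "prodv x r lam ?j" "r ?j = ?s" using find_props[where D=lam and s="?s"] by auto
    have "?t 0 < ?j"
    proof (rule ccontr)
      assume "\<not> ?t 0 < ?j"
      then have le: "?j \<le> ?t 0" by simp
      have "r ?j = r (?t 0)" using chain[OF fj(1) pt[of 0] le] tau0_least by auto
      then show False using fj(2) by simp
    qed
    then have "c (?t 0) \<le> (\<Sum>i\<in>{1..<?j}. c i)"
      using t1(1)[of 0] cnn by (intro member_le_sum) auto
    then show ?thesis using H[of lam ?s] cost[of ?s lam] by simp
  qed
  have Ck: "(\<Sum>m\<le>Suc k. c (?t m)) + \<alpha>1 * x (?t k) + \<beta>1 \<le> R * x (?t k)" for k
  proof -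
    let ?s = "r (?t k)"
    have "\<forall>D>x (?t k). (\<Sum>m\<le>Suc k. c (?t m)) + \<beta>1 \<le> (R - \<alpha>1) * D"
    proof (intro allI impI)
      fix D assume D: "D > x (?t k)"
      then have Dl: "D \<ge> lam" using t1(2)[of k] by simp
      let ?j = "find_step x r ?s D"
      have fj: "prodv x r lam ?j" "r ?j = ?s" "D \<le> x ?j" using find_props[OF Dl, where s="?s"] by auto
      have j1: "?t k < ?j"
      proof (rule ccontr)
        assume "\<not> ?t k < ?j"
        then have "?j < ?t k \<or> ?j = ?t k" by auto
        then show False
        proof
          assume "?j < ?t k"
          then have "x ?j < x (?t k)" using pt[of k] fj unfolding prodv_def by auto
          then show False using D fj(3) by simp
        next
          assume "?j = ?t k" then show False using D fj(3) by simp
        qed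
      qed
      have j2: "?t (Suc k) < ?j"
      proof (rule ccontr)
        assume "\<not> ?t (Suc k) < ?j"
        then have le: "?j \<le> ?t (Suc k)" by simp
        let ?n = "nextp x r lam (?t k)"
        have n: "?t k < ?n" "prodv x r lam ?n" "?n \<le> ?j" using nextp_props[OF fj(1) j1] by auto
        have rn: "r ?n \<noteq> r (?t k)" using tau_props(1)[of k] unfolding turn_def by auto
        have "r ?n = r ?j"
          using chain[OF n(2) fj(1) n(3)] tau_props(3)[of k] n(1) le by force
        then show False using rn fj(2) by simp
      qed
      have "(\<Sum>m\<le>Suc k. c (?t m)) = (\<Sum>i\<in>?t ` {..Suc k}. c i)"
        using sum.reindex[of ?t "{..Suc k}" c] strict_mono_imp_inj_on[OF sm] by simp
      also have "\<dots> \<le> (\<Sum>i\<in>{1..<?j}. c i)"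
      proof (rule sum_mono2)
        show "?t ` {..Suc k} \<subseteq> {1..<?j}"
        proof
          fix i assume "i \<in> ?t ` {..Suc k}"
          then obtain m where m: "m \<le> Suc k" "i = ?t m" by auto
          have "?t m \<le> ?t (Suc k)" using m(1) strict_mono_less_eq[OF sm] by blast
          then show "i \<in> {1..<?j}" using m t1(1)[of m] j2 by auto
        qed
        show "\<And>b. b \<in> {1..<?j} - ?t ` {..Suc k} \<Longrightarrow> 0 \<le> c b" using cnn by auto
      qed simp
      finally have "(\<Sum>m\<le>Suc k. c (?t m)) \<le> (\<Sum>i\<in>{1..<?j}. c i)" .
      moreover have "search_cost \<alpha>1 \<beta>1 \<alpha>2 \<beta>2 x r ?s D \<le> R * D" using H Dl by blast
      ultimately show "(\<Sum>m\<le>Suc k. c (?t m)) + \<beta>1 \<le> (R - \<alpha>1) * D"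
        using cost[of ?s D] by (simp add: algebra_simps)
    qed
    then have "(\<Sum>m\<le>Suc k. c (?t m)) + \<beta>1 \<le> (R - \<alpha>1) * x (?t k)" by (rule lim_le)
    then show ?thesis by (simp add: algebra_simps)
  qed
  show ?thesis
    apply (rule exI[of _ "\<lambda>k. x (?t k)"])
    using t1(2) C0 Ck unfolding c_def by auto
qed

end


lemma gal:
  fixes U :: "nat \<Rightarrow> real" and t M \<epsilon> :: real
  assumes U0: "U 0 > 0" and inc: "\<And>k. U k < U (Suc k)"
    and rec: "\<And>k. U (Suc (Suc k)) \<le> t * (U (Suc k) - U k)"
    and M: "U 1 / U 0 \<le> M" and eps: "\<epsilon> > 0"
    and q: "\<And>\<rho>. 1 < \<rho> \<Longrightarrow> \<rho> \<le> M \<Longrightarrow> \<epsilon>*\<rho> \<le> \<rho>*\<rho> - t*\<rho> + t"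
  shows False
proof -
  have pos: "U k > 0" for k by (induction k) (use U0 inc in \<open>auto intro: less_trans\<close>)
  define \<rho> where "\<rho> k = U (Suc k) / U k" for k
  have gt1: "\<rho> k > 1" for k unfolding \<rho>_def using pos[of k] inc[of k] by simp
  have step: "\<rho> (Suc k) \<le> t - t / \<rho> k" for k
  proof -
    have "\<rho> (Suc k) = U (Suc (Suc k)) / U (Suc k)" unfolding \<rho>_def by simp
    also have "\<dots> \<le> t * (U (Suc k) - U k) / U (Suc k)"
      using rec[of k] pos[of "Suc k"] by (simp add: divide_right_mono)
    also have "\<dots> = t - t / \<rho> k" unfolding \<rho>_def using pos[of k] pos[of "Suc k"]
      by (simp add: field_simps)
    finally show ?thesis .
  qed
  have bound: "\<rho> k \<le> M - real k * \<epsilon>" for k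
  proof (induction k)
    case 0 then show ?case using M unfolding \<rho>_def by simp
  next
    case (Suc k)
    have "\<rho> k \<le> M" using Suc eps by (smt (verit) of_nat_0_le_iff mult_nonneg_nonneg)
    then have "\<epsilon> * \<rho> k \<le> \<rho> k * \<rho> k - t * \<rho> k + t" using q gt1 by auto
    then have "\<epsilon> \<le> \<rho> k - t + t / \<rho> k" using gt1[of k]
      by (simp add: field_simps)
    then have "\<rho> (Suc k) \<le> \<rho> k - \<epsilon>" using step[of k] by linarith
    then show ?case using Suc by (simp add: algebra_simps)
  qed
  obtain n :: nat where n: "M / \<epsilon> < real n" using reals_Archimedean2 by blast
  then have "M < real n * \<epsilon>" using eps by (simp add: field_simps)
  then show False using bound[of n] gt1[of n] by linarith
qed



lemma shifted:
  fixes \<alpha>1 \<alpha>2 \<beta>1 \<beta>2 lam R :: real and z :: "nat \<Rightarrow> real"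
  assumes A: "\<alpha>1 + \<alpha>2 > 0" and lam: "lam > 0" and nn: "\<beta>1 \<ge> 0" "\<beta>2 \<ge> 0"
    and z: "\<And>k. z k \<ge> lam"
    and C0: "((\<alpha>1 * z 0 + \<beta>1) + (\<alpha>2 * z 0 + \<beta>2)) + (\<alpha>1 * lam + \<beta>1) \<le> R * lam"
    and Ck: "\<And>k. (\<Sum>m\<le>Suc k. (\<alpha>1 * z m + \<beta>1) + (\<alpha>2 * z m + \<beta>2)) + \<alpha>1 * z k + \<beta>1 \<le> R * z k"
  defines "t \<equiv> (R - \<alpha>1) / (\<alpha>1 + \<alpha>2)"
  assumes wd: "\<And>k. w k = z k + (\<beta>1 + \<beta>2) / (\<alpha>1 + \<alpha>2)"
  shows "t > 0" "\<And>k. w k > 0"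
    "w 0 + \<beta>1 / (\<alpha>1 + \<alpha>2) \<le> t * lam"
    "\<And>k. (\<Sum>m\<le>Suc k. w m) + (\<beta>1 + t * (\<beta>1 + \<beta>2)) / (\<alpha>1 + \<alpha>2) \<le> t * w k"
proof -
  let ?A = "\<alpha>1 + \<alpha>2" and ?B = "\<beta>1 + \<beta>2"
  have cw: "(\<alpha>1 * z m + \<beta>1) + (\<alpha>2 * z m + \<beta>2) = ?A * w m" for m
    unfolding wd using A by (simp add: field_simps)
  have Q: "R - \<alpha>1 = ?A * t" unfolding t_def using A by simp
  show wpos: "w k > 0" for k unfolding wd using z[of k] lam A nn
    by (smt (verit) divide_nonneg_pos)
  have "?A * w 0 + \<beta>1 \<le> ?A * t * lam" using C0 cw[of 0] Q by (simp add: algebra_simps)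
  moreover have "?A * (w 0 + \<beta>1 / ?A) = ?A * w 0 + \<beta>1" using A by (simp add: distrib_left)
  ultimately have "?A * (w 0 + \<beta>1 / ?A) \<le> ?A * (t * lam)" by (simp add: algebra_simps)
  then show w0: "w 0 + \<beta>1 / ?A \<le> t * lam" using A by simp
  have "0 < w 0 + \<beta>1 / ?A" using wpos[of 0] nn A by (smt (verit) divide_nonneg_pos)
  then show "t > 0" using w0 lam by (smt (verit) mult_nonpos_nonneg zero_less_mult_pos2)
  fix k
  have "(\<Sum>m\<le>Suc k. (\<alpha>1 * z m + \<beta>1) + (\<alpha>2 * z m + \<beta>2)) = ?A * (\<Sum>m\<le>Suc k. w m)"
    unfolding cw by (rule sum_distrib_left[symmetric])
  then have "?A * (\<Sum>m\<le>Suc k. w m) + \<beta>1 \<le> (R - \<alpha>1) * z k" using Ck[of k] by (simp add: algebra_simps)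
  also have "\<dots> = ?A * t * w k - t * ?B" unfolding Q wd using A by (simp add: field_simps)
  finally have "?A * (\<Sum>m\<le>Suc k. w m) + (\<beta>1 + t * ?B) \<le> ?A * (t * w k)"
    by (simp add: algebra_simps)
  moreover have "?A * ((\<Sum>m\<le>Suc k. w m) + (\<beta>1 + t * ?B) / ?A) = ?A * (\<Sum>m\<le>Suc k. w m) + (\<beta>1 + t * ?B)"
    using A by (simp add: field_simps)
  ultimately have "?A * ((\<Sum>m\<le>Suc k. w m) + (\<beta>1 + t * ?B) / ?A) \<le> ?A * (t * w k)" by simp
  then show "(\<Sum>m\<le>Suc k. w m) + (\<beta>1 + t * ?B) / ?A \<le> t * w k" using A by simp
qed

lemma lower_i:
  fixes \<alpha>1 \<alpha>2 \<beta>1 \<beta>2 lam R :: real and z :: "nat \<Rightarrow> real"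
  assumes A: "\<alpha>1 + \<alpha>2 > 0" and lam: "lam > 0" and nn: "\<beta>1 \<ge> 0" "\<beta>2 \<ge> 0"
    and z: "\<And>k. z k \<ge> lam"
    and C0: "((\<alpha>1 * z 0 + \<beta>1) + (\<alpha>2 * z 0 + \<beta>2)) + (\<alpha>1 * lam + \<beta>1) \<le> R * lam"
    and Ck: "\<And>k. (\<Sum>m\<le>Suc k. (\<alpha>1 * z m + \<beta>1) + (\<alpha>2 * z m + \<beta>2)) + \<alpha>1 * z k + \<beta>1 \<le> R * z k"
  shows "5 * \<alpha>1 + 4 * \<alpha>2 \<le> R"
proof -
  define t where "t = (R - \<alpha>1) / (\<alpha>1 + \<alpha>2)"
  define w where "w = (\<lambda>k. z k + (\<beta>1 + \<beta>2) / (\<alpha>1 + \<alpha>2))"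
  note sh = shifted[OF A lam nn z C0 Ck, where w=w, folded t_def, OF fun_cong[OF w_def]]
  have Rt: "R = \<alpha>1 + (\<alpha>1 + \<alpha>2) * t" unfolding t_def using A by simp
  have "t \<ge> 4"
  proof (rule ccontr)
    assume "\<not> t \<ge> 4"
    then have t4: "t < 4" by simp
    have tp: "t > 0" using sh(1) .
    have wpos: "w k > 0" for k using sh(2)[of k] .
    define V where "V k = (\<Sum>m\<le>k. w m)" for k
    have K: "(\<beta>1 + t * (\<beta>1 + \<beta>2)) / (\<alpha>1 + \<alpha>2) \<ge> 0" using nn tp A by simp
    have V1: "V (Suc k) \<le> t * w k" for k using sh(4)[of k] K unfolding V_def by linarith
    have st: "sqrt t < 2" using t4 tp real_sqrt_less_iff[of t 4] by simp
    have sq: "sqrt t * sqrt t = t" using tp by simp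
    have sp: "sqrt t > 0" using tp by simp
    show False
    proof (rule gal[where U=V and t=t and M=t and \<epsilon>="2 * sqrt t - t"])
      show "V 0 > 0" unfolding V_def using wpos[of 0] by simp
      show "V k < V (Suc k)" for k unfolding V_def using wpos[of "Suc k"] by simp
      show "V (Suc (Suc k)) \<le> t * (V (Suc k) - V k)" for k
        using V1[of "Suc k"] unfolding V_def by simp
      show "V 1 / V 0 \<le> t" using V1[of 0] wpos[of 0] unfolding V_def by (simp add: divide_le_eq)
      have "sqrt t * (2 - sqrt t) > 0" using st sp by simp
      then show "2 * sqrt t - t > 0" using sq by (simp add: algebra_simps)
      fix \<rho> :: real
      have "0 \<le> (\<rho> - sqrt t) * (\<rho> - sqrt t)" by simp
      then show "(2 * sqrt t - t) * \<rho> \<le> \<rho> * \<rho> - t * \<rho> + t" using sq by (simp add: algebra_simps)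
    qed
  qed
  then have "(\<alpha>1 + \<alpha>2) * 4 \<le> (\<alpha>1 + \<alpha>2) * t" using A by (intro mult_left_mono) auto
  then show ?thesis using Rt by (simp add: algebra_simps)
qed

lemma quad_ii:
  fixes T t \<Phi> \<rho> :: real
  assumes T: "T * (\<Phi> - 1) = \<Phi>^2" and P1: "\<Phi> > 1" and P2: "\<Phi> \<le> 2"
    and tT: "t < T" and r1: "1 < \<rho>" and rP: "\<rho> \<le> \<Phi>"
  shows "min ((T - t) * (\<Phi> - 1) / (2 * \<Phi>)) ((\<Phi> - 1)^2 / (4 * \<Phi>)) * \<rho> \<le> \<rho> * \<rho> - t * \<rho> + t"
proof -
  define d where "d = T - t"
  define \<epsilon> where "\<epsilon> = min (d * (\<Phi> - 1) / (2 * \<Phi>)) ((\<Phi> - 1)^2 / (4 * \<Phi>))"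
  have dp: "d > 0" unfolding d_def using tT by simp
  have T2: "T \<ge> 2 * \<Phi>"
  proof -
    have "2 * \<Phi> * (\<Phi> - 1) \<le> \<Phi>^2" using P2 P1 by (simp add: power2_eq_square algebra_simps)
    then have "2 * \<Phi> * (\<Phi> - 1) \<le> T * (\<Phi> - 1)" using T by simp
    then show ?thesis using P1 by simp
  qed
  have id: "\<rho> * \<rho> - t * \<rho> + t = (\<Phi> - \<rho>) * (T - \<Phi> - \<rho>) + d * (\<rho> - 1)"
  proof -
    have "\<Phi> * T - \<Phi>^2 = T" using T by (simp add: algebra_simps)
    then show ?thesis unfolding d_def by (simp add: algebra_simps power2_eq_square)
  qed
  have "(\<Phi> - \<rho>) * (\<Phi> - \<rho>) \<le> (\<Phi> - \<rho>) * (T - \<Phi> - \<rho>)"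
    using rP T2 by (intro mult_left_mono) auto
  then have h: "(\<Phi> - \<rho>) * (\<Phi> - \<rho>) + d * (\<rho> - 1) \<le> \<rho> * \<rho> - t * \<rho> + t" using id by simp
  have eP: "\<epsilon> * \<rho> \<le> \<epsilon> * \<Phi>"
  proof -
    have "\<epsilon> \<ge> 0" unfolding \<epsilon>_def using dp P1 by simp
    then show ?thesis using rP by (intro mult_left_mono) auto
  qed
  have "\<epsilon> * \<Phi> \<le> (\<Phi> - \<rho>) * (\<Phi> - \<rho>) + d * (\<rho> - 1)"
  proof (cases "\<rho> \<ge> (1 + \<Phi>) / 2")
    case True
    have "\<epsilon> * \<Phi> \<le> d * (\<Phi> - 1) / (2 * \<Phi>) * \<Phi>" unfolding \<epsilon>_def using P1
      by (intro mult_right_mono) auto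
    also have "\<dots> = d * ((\<Phi> - 1) / 2)" using P1 by (simp add: field_simps)
    also have "\<dots> \<le> d * (\<rho> - 1)" using True dp by (intro mult_left_mono) auto
    finally have "\<epsilon> * \<Phi> \<le> d * (\<rho> - 1)" .
    moreover have "0 \<le> (\<Phi> - \<rho>) * (\<Phi> - \<rho>)" by simp
    ultimately show ?thesis by linarith
  next
    case False
    have "\<epsilon> * \<Phi> \<le> (\<Phi> - 1)^2 / (4 * \<Phi>) * \<Phi>" unfolding \<epsilon>_def using P1
      by (intro mult_right_mono) auto
    also have "\<dots> = ((\<Phi> - 1) / 2) * ((\<Phi> - 1) / 2)" using P1 by (simp add: field_simps power2_eq_square)
    also have "\<dots> \<le> (\<Phi> - \<rho>) * (\<Phi> - \<rho>)" using False P1 by (intro mult_mono) auto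
    finally show ?thesis using dp r1 by (smt (verit) mult_nonneg_nonneg)
  qed
  then show ?thesis using h eP unfolding \<epsilon>_def d_def by linarith
qed


lemma lower_ii:
  fixes \<alpha>1 \<alpha>2 \<beta>1 \<beta>2 lam R p b \<Phi> :: real and z :: "nat \<Rightarrow> real"
  assumes A: "\<alpha>1 + \<alpha>2 > 0" and lam: "lam > 0" and nn: "\<beta>1 \<ge> 0" "\<beta>2 \<ge> 0"
    and pdef: "\<beta>1 = p * ((\<alpha>1 + \<alpha>2) * lam)" and bdef: "\<beta>1 + \<beta>2 = b * ((\<alpha>1 + \<alpha>2) * lam)"
    and bpos: "b > 0" and P1: "\<Phi> > 1" and P2: "\<Phi> \<le> 2"
    and T: "((1 + b) * \<Phi> + p) * (\<Phi> - 1) = \<Phi>^2"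
    and z: "\<And>k. z k \<ge> lam"
    and C0: "((\<alpha>1 * z 0 + \<beta>1) + (\<alpha>2 * z 0 + \<beta>2)) + (\<alpha>1 * lam + \<beta>1) \<le> R * lam"
    and Ck: "\<And>k. (\<Sum>m\<le>Suc k. (\<alpha>1 * z m + \<beta>1) + (\<alpha>2 * z m + \<beta>2)) + \<alpha>1 * z k + \<beta>1 \<le> R * z k"
  shows "\<alpha>1 + (\<alpha>1 + \<alpha>2) * ((1 + b) * \<Phi> + p) \<le> R"
proof -
  define t where "t = (R - \<alpha>1) / (\<alpha>1 + \<alpha>2)"
  define w where "w = (\<lambda>k. z k + (\<beta>1 + \<beta>2) / (\<alpha>1 + \<alpha>2))"
  define TT where "TT = (1 + b) * \<Phi> + p"
  note sh = shifted[OF A lam nn z C0 Ck, where w=w, folded t_def, OF fun_cong[OF w_def]]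
  have Rt: "R = \<alpha>1 + (\<alpha>1 + \<alpha>2) * t" unfolding t_def using A by simp
  have tp: "t > 0" using sh(1) .
  have wpos: "w k > 0" for k using sh(2)[of k] .
  have pp: "p \<ge> 0"
  proof -
    have "0 \<le> p * ((\<alpha>1 + \<alpha>2) * lam)" using pdef nn by simp
    moreover have "(\<alpha>1 + \<alpha>2) * lam > 0" using A lam by simp
    ultimately show ?thesis by (simp add: zero_le_mult_iff)
  qed
  have b1A: "\<beta>1 / (\<alpha>1 + \<alpha>2) = p * lam" unfolding pdef using A by simp
  have BA: "(\<beta>1 + \<beta>2) / (\<alpha>1 + \<alpha>2) = b * lam" unfolding bdef using A by simp
  have "t \<ge> TT"
  proof (rule ccontr)
    assume "\<not> t \<ge> TT"
    then have tT: "t < TT" by simp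
    define K where "K = lam * (p + t * b)"
    have Keq: "(\<beta>1 + t * (\<beta>1 + \<beta>2)) / (\<alpha>1 + \<alpha>2) = K"
    proof -
      have "(\<beta>1 + t * (\<beta>1 + \<beta>2)) / (\<alpha>1 + \<alpha>2) = \<beta>1 / (\<alpha>1 + \<alpha>2) + t * ((\<beta>1 + \<beta>2) / (\<alpha>1 + \<alpha>2))"
        using add_divide_distrib[of "\<beta>1" "t * (\<beta>1 + \<beta>2)" "\<alpha>1 + \<alpha>2"] times_divide_eq_right[of t "\<beta>1 + \<beta>2" "\<alpha>1 + \<alpha>2"]
        by (simp only:)
      then show ?thesis unfolding K_def b1A BA by (simp add: algebra_simps)
    qed
    have Kp: "K > 0" unfolding K_def using lam pp tp bpos by (simp add: add_nonneg_pos)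
    define U where "U k = (\<Sum>m<k. w m) + K" for k
    have w0: "w 0 + p * lam \<le> t * lam" using sh(3) b1A by simp
    have M0: "U 1 / U 0 \<le> t * (1 + b) / (p + t * b)"
    proof -
      have "U 1 \<le> t * lam * (1 + b)" unfolding U_def K_def using w0 by (simp add: algebra_simps)
      moreover have "U 0 > 0" unfolding U_def using Kp by simp
      ultimately have "U 1 / U 0 \<le> t * lam * (1 + b) / U 0" by (intro divide_right_mono) auto
      also have "\<dots> = t * (1 + b) / (p + t * b)" unfolding U_def K_def using lam by simp
      finally show ?thesis .
    qed
    have MP: "t * (1 + b) / (p + t * b) \<le> \<Phi>"
    proof -
      have "(1 + b) * \<Phi> > 0" using P1 bpos by simp
      then have TTp: "TT > 0" unfolding TT_def using pp by linarith
      have key: "TT * (1 + b - b * \<Phi>) = \<Phi> * p"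
      proof -
        have "\<Phi> * p = \<Phi> * TT - (1 + b) * \<Phi>^2" unfolding TT_def by (simp add: algebra_simps power2_eq_square)
        also have "\<dots> = \<Phi> * TT - (1 + b) * (TT * (\<Phi> - 1))" using T unfolding TT_def by simp
        finally show ?thesis by (simp add: algebra_simps)
      qed
      have nn2: "1 + b - b * \<Phi> \<ge> 0"
      proof -
        have "TT * (1 + b - b * \<Phi>) \<ge> 0" using key P1 pp by simp
        then show ?thesis using TTp by (simp add: zero_le_mult_iff)
      qed
      have "t * (1 + b - b * \<Phi>) \<le> TT * (1 + b - b * \<Phi>)" using tT nn2 by (intro mult_right_mono) auto
      then have "t * (1 + b) \<le> \<Phi> * (p + t * b)" using key by (simp add: algebra_simps)
      moreover have "p + t * b > 0" using pp tp bpos by (simp add: add_nonneg_pos)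
      ultimately show ?thesis by (simp add: divide_le_eq)
    qed
    show False
    proof (rule gal[where U=U and t=t and M="t * (1 + b) / (p + t * b)"
          and \<epsilon>="min ((TT - t) * (\<Phi> - 1) / (2 * \<Phi>)) ((\<Phi> - 1)^2 / (4 * \<Phi>))"])
      show "U 0 > 0" unfolding U_def using Kp by simp
      show "U k < U (Suc k)" for k unfolding U_def using wpos[of k] by simp
      show "U (Suc (Suc k)) \<le> t * (U (Suc k) - U k)" for k
        using sh(4)[of k] Keq unfolding U_def by (simp add: lessThan_Suc_atMost[symmetric])
      show "U 1 / U 0 \<le> t * (1 + b) / (p + t * b)" by (rule M0)
      show "min ((TT - t) * (\<Phi> - 1) / (2 * \<Phi>)) ((\<Phi> - 1)^2 / (4 * \<Phi>)) > 0"
        using tT P1 by simp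
      fix \<rho> :: real assume "1 < \<rho>" "\<rho> \<le> t * (1 + b) / (p + t * b)"
      then show "min ((TT - t) * (\<Phi> - 1) / (2 * \<Phi>)) ((\<Phi> - 1)^2 / (4 * \<Phi>)) * \<rho> \<le> \<rho> * \<rho> - t * \<rho> + t"
        using quad_ii[of TT \<Phi> t \<rho>] T P1 P2 tT MP unfolding TT_def by simp
    qed
  qed
  then have "(\<alpha>1 + \<alpha>2) * TT \<le> (\<alpha>1 + \<alpha>2) * t" using A by (intro mult_left_mono) auto
  then show ?thesis using Rt unfolding TT_def by (simp add: algebra_simps)
qed



lemma periodic_rays_eq:
  assumes "periodic_rays r"
  shows "r (2 * k + 1) = r 1" "r (2 * k + 2) = r 2" "r 2 = (\<not> r 1)"
proof -
  have p: "\<And>i. i \<ge> 1 \<Longrightarrow> r (i + 2) = r i" "r 1 \<noteq> r 2" using assms unfolding periodic_rays_def by auto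
  show "r (2 * k + 1) = r 1"
  proof (induction k)
    case (Suc k)
    have "r (2 * Suc k + 1) = r ((2 * k + 1) + 2)" by simp
    also have "\<dots> = r (2 * k + 1)" using p(1)[of "2*k+1"] by simp
    finally show ?case using Suc by simp
  qed simp
  show "r (2 * k + 2) = r 2"
  proof (induction k)
    case (Suc k)
    have "r (2 * Suc k + 2) = r ((2 * k + 2) + 2)" by simp
    also have "\<dots> = r (2 * k + 2)" using p(1)[of "2*k+2"] by simp
    finally show ?case using Suc by simp
  qed (simp add: eval_nat_numeral)
  show "r 2 = (\<not> r 1)" using p(2) by auto
qed

lemma periodic_cr:
  fixes \<alpha>1 \<alpha>2 \<beta>1 \<beta>2 lam R :: real and x :: "nat \<Rightarrow> real" and r :: "nat \<Rightarrow> bool"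
  assumes nn: "\<alpha>1 \<ge> 0" "\<alpha>2 \<ge> 0" "\<beta>1 \<ge> 0" "\<beta>2 \<ge> 0" and lam: "lam > 0"
    and per: "periodic_rays r"
    and x0: "x 0 = lam" and inc: "\<And>i. x i < x (Suc i)" and unb: "\<And>M. \<exists>i. x i > M"
    and F: "\<And>n. (\<Sum>i\<in>{1..<n+2}. (\<alpha>1 * x i + \<beta>1) + (\<alpha>2 * x i + \<beta>2)) + \<alpha>1 * x n + \<beta>1 = R * x n"
  shows "search_strategy x r" "comp_ratio \<alpha>1 \<beta>1 \<alpha>2 \<beta>2 lam x r = ereal R"
proof -
  define c where "c = (\<lambda>i. (\<alpha>1 * x i + \<beta>1) + (\<alpha>2 * x i + \<beta>2))"
  have sm: "strict_mono x" using inc by (simp add: strict_mono_Suc_iff)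
  have xpos: "x i > 0" for i
  proof -
    have "x 0 \<le> x i" using sm by (simp add: strict_mono_less_eq)
    then show ?thesis using x0 lam by simp
  qed
  have cnn: "c i \<ge> 0" for i unfolding c_def using nn xpos[of i] by simp
  have F0: "c 1 + \<alpha>1 * lam + \<beta>1 = R * lam" using F[of 0] x0 unfolding c_def by simp
  have Ra: "R \<ge> \<alpha>1"
  proof -
    have "\<alpha>1 * lam \<le> R * lam" using F0 cnn[of 1] nn by linarith
    then show ?thesis using lam by simp
  qed
  show ss: "search_strategy x r"
    unfolding search_strategy_def
  proof (intro conjI allI impI)
    fix i :: nat assume "1 \<le> i" then show "0 < x i" using xpos by simp
  next
    fix M
    obtain i where i: "x i > M" using unb by blast
    have a: "x (2*i+1) > M" "x (2*i+2) > M"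
      using i sm by (smt (verit, ccfv_SIG) le_add1 mult_2 le_add2 strict_mono_less_eq trans_le_add1)+
    show "\<exists>i\<ge>1. r i \<and> M < x i" "\<exists>i\<ge>1. \<not> r i \<and> M < x i"
      using periodic_rays_eq(1,2)[OF per, of i] periodic_rays_eq(3)[OF per] a by (cases "r 1"; force)+
  qed
  have cost: "search_cost \<alpha>1 \<beta>1 \<alpha>2 \<beta>2 x r s D \<le> R * D" if D: "D \<ge> lam" for s D
  proof -
    let ?j = "find_step x r s D"
    note fp = find_props[OF ss lam D, where s=s]
    have cj: "search_cost \<alpha>1 \<beta>1 \<alpha>2 \<beta>2 x r s D = (\<Sum>i\<in>{1..<?j}. c i) + (\<alpha>1 * D + \<beta>1)"
      unfolding search_cost_def c_def by simp
    consider "?j = 1" | "?j = 2" | "?j \<ge> 3" using fp(1) by linarith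
    then show ?thesis
    proof cases
      case 1
      have "\<beta>1 \<le> (R - \<alpha>1) * lam" using F0 cnn[of 1] by (simp add: algebra_simps)
      also have "\<dots> \<le> (R - \<alpha>1) * D" using Ra D by (intro mult_left_mono) auto
      finally show ?thesis using cj 1 by (simp add: algebra_simps)
    next
      case 2
      have "(R - \<alpha>1) * lam \<le> (R - \<alpha>1) * D" using Ra D by (intro mult_left_mono) auto
      moreover have "(\<Sum>i\<in>{1..<2::nat}. c i) = c 1" by (simp add: numeral_2_eq_2)
      ultimately show ?thesis using cj 2 F0 by (simp add: algebra_simps)
    next
      case 3
      define n where "n = ?j - 2"
      have jn: "?j = n + 2" "n \<ge> 1" unfolding n_def using 3 by auto
      have "r n = r (n + 2)" using per jn(2) unfolding periodic_rays_def by auto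
      then have "r n = s" using fp(2) jn(1) by simp
      then have xn: "x n < D" using fp(4)[of n] jn by simp
      have "(\<Sum>i\<in>{1..<?j}. c i) + \<alpha>1 * x n + \<beta>1 = R * x n" using F[of n] jn(1) unfolding c_def by simp
      moreover have "(R - \<alpha>1) * x n \<le> (R - \<alpha>1) * D" using Ra xn by (intro mult_left_mono) auto
      ultimately show ?thesis using cj by (simp add: algebra_simps)
    qed
  qed
  show "comp_ratio \<alpha>1 \<beta>1 \<alpha>2 \<beta>2 lam x r = ereal R"
    unfolding comp_ratio_def
  proof (rule antisym)
    show "(SUP p\<in>{p. lam \<le> snd p}. ereal (search_cost \<alpha>1 \<beta>1 \<alpha>2 \<beta>2 x r (fst p) (snd p) / snd p)) \<le> ereal R"
    proof (rule SUP_least)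
      fix p :: "bool \<times> real" assume "p \<in> {p. lam \<le> snd p}"
      then have D: "lam \<le> snd p" by simp
      then have "snd p > 0" using lam by simp
      then show "ereal (search_cost \<alpha>1 \<beta>1 \<alpha>2 \<beta>2 x r (fst p) (snd p) / snd p) \<le> ereal R"
        using cost[OF D, of "fst p"] by (simp add: divide_le_eq)
    qed
    have fs: "find_step x r (\<not> r 1) lam = 2"
      unfolding find_step_def
    proof (rule Least_equality)
      show "(2::nat) \<ge> 1 \<and> r 2 = (\<not> r 1) \<and> x 2 \<ge> lam"
        using periodic_rays_eq(3)[OF per] x0 sm strict_mono_less_eq[OF sm, of 0 2] by simp
      fix j assume "1 \<le> j \<and> r j = (\<not> r 1) \<and> lam \<le> x j"
      then show "2 \<le> j" by (cases "j = 1") auto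
    qed
    have "search_cost \<alpha>1 \<beta>1 \<alpha>2 \<beta>2 x r (\<not> r 1) lam = R * lam"
      unfolding search_cost_def fs using F0 unfolding c_def by (simp add: numeral_2_eq_2)
    then have "ereal R = ereal (search_cost \<alpha>1 \<beta>1 \<alpha>2 \<beta>2 x r (fst (\<not> r 1, lam)) (snd (\<not> r 1, lam)) / snd (\<not> r 1, lam))"
      using lam by simp
    also have "\<dots> \<le> (SUP p\<in>{p. lam \<le> snd p}. ereal (search_cost \<alpha>1 \<beta>1 \<alpha>2 \<beta>2 x r (fst p) (snd p) / snd p))"
      by (rule SUP_upper) simp
    finally show "ereal R \<le> (SUP p\<in>{p. lam \<le> snd p}. ereal (search_cost \<alpha>1 \<beta>1 \<alpha>2 \<beta>2 x r (fst p) (snd p) / snd p))" .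
  qed
qed



lemma cr_lower:
  fixes \<alpha>1 \<alpha>2 \<beta>1 \<beta>2 lam Rs :: real and x :: "nat \<Rightarrow> real" and r :: "nat \<Rightarrow> bool"
  assumes nn: "\<alpha>1 \<ge> 0" "\<alpha>2 \<ge> 0" "\<beta>1 \<ge> 0" "\<beta>2 \<ge> 0" and lam: "lam > 0"
    and ss: "search_strategy x r"
    and LB: "\<And>R z. (\<And>k. z k \<ge> lam) \<Longrightarrow>
      ((\<alpha>1 * z 0 + \<beta>1) + (\<alpha>2 * z 0 + \<beta>2)) + (\<alpha>1 * lam + \<beta>1) \<le> R * lam \<Longrightarrow>
      (\<And>k. (\<Sum>m\<le>Suc k. (\<alpha>1 * z m + \<beta>1) + (\<alpha>2 * z m + \<beta>2)) + \<alpha>1 * z k + \<beta>1 \<le> R * z k) \<Longrightarrow>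
      Rs \<le> R"
  shows "ereal Rs \<le> comp_ratio \<alpha>1 \<beta>1 \<alpha>2 \<beta>2 lam x r"
proof -
  let ?CR = "comp_ratio \<alpha>1 \<beta>1 \<alpha>2 \<beta>2 lam x r"
  have ge: "ereal (search_cost \<alpha>1 \<beta>1 \<alpha>2 \<beta>2 x r s D / D) \<le> ?CR" if "D \<ge> lam" for s D
    unfolding comp_ratio_def using that
    by (intro SUP_upper2[of "(s, D)"]) auto
  show ?thesis
  proof (cases ?CR)
    case (real R)
    have H: "search_cost \<alpha>1 \<beta>1 \<alpha>2 \<beta>2 x r s D \<le> R * D" if D: "D \<ge> lam" for s D
    proof -
      have "search_cost \<alpha>1 \<beta>1 \<alpha>2 \<beta>2 x r s D / D \<le> R" using ge[OF D, of s] real by simp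
      moreover have "D > 0" using D lam by simp
      ultimately show ?thesis by (simp add: divide_le_eq)
    qed
    obtain z where z: "\<And>k. z k \<ge> lam"
      "((\<alpha>1 * z 0 + \<beta>1) + (\<alpha>2 * z 0 + \<beta>2)) + (\<alpha>1 * lam + \<beta>1) \<le> R * lam"
      "\<And>k. (\<Sum>m\<le>Suc k. (\<alpha>1 * z m + \<beta>1) + (\<alpha>2 * z m + \<beta>2)) + \<alpha>1 * z k + \<beta>1 \<le> R * z k"
      using extract_seq[OF ss lam nn H] by blast
    have "Rs \<le> R" using LB[OF z(1) z(2) z(3)] .
    then show ?thesis using real by simp
  next
    case PInf then show ?thesis by simp
  next
    case MInf
    then show ?thesis using ge[of lam True] by simp
  qed
qed

lemma unb_lemma:
  fixes x :: "nat \<Rightarrow> real"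
  assumes "\<And>n. x n \<ge> lam * (1 + real n * d)" "lam > 0" "d > 0"
  shows "\<exists>i. x i > M"
proof -
  obtain n :: nat where n: "M / (lam * d) < real n" using reals_Archimedean2 by blast
  then have "M < real n * (lam * d)" using assms by (simp add: divide_less_eq)
  also have "\<dots> < lam * (1 + real n * d)" using assms by (simp add: algebra_simps)
  finally show ?thesis using assms(1)[of n] by (intro exI[of _ n]) linarith
qed



lemma F_ind:
  fixes x :: "nat \<Rightarrow> real" and c :: "real \<Rightarrow> real"
  assumes base: "c (x 1) + \<alpha>1 * x 0 + \<beta>1 = R * x 0"
    and step: "\<And>n. c (x (n+2)) = (R - \<alpha>1) * (x (Suc n) - x n)"
  shows "(\<Sum>i\<in>{1..<n+2}. c (x i)) + \<alpha>1 * x n + \<beta>1 = R * x n"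
proof (induction n)
  case 0 then show ?case using base by (simp add: numeral_2_eq_2)
next
  case (Suc n)
  have "(\<Sum>i\<in>{1..<Suc n+2}. c (x i)) = (\<Sum>i\<in>{1..<n+2}. c (x i)) + c (x (n+2))"
    by simp
  then show ?case using Suc step[of n] by (simp add: algebra_simps)
qed



theorem theorem5:
  fixes \<alpha>1 \<alpha>2 \<beta>1 \<beta>2 lam :: real
  assumes "\<alpha>1 \<ge> 0" "\<alpha>2 \<ge> 0" "\<alpha>1 + \<alpha>2 > 0" "\<beta>1 \<ge> 0" "\<beta>2 \<ge> 0" "lam > 0"
  defines "u \<equiv> (\<alpha>1 + \<alpha>2) * lam"
  defines "a \<equiv> (3 * \<beta>1 + 2 * \<beta>2) / (2 * u)"
  defines "b \<equiv> (\<beta>1 + \<beta>2) / u"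
  defines "\<Phi> \<equiv> 1 + inverse ((2 * \<beta>1 + \<beta>2 - u
                 + sqrt ((2 * \<beta>1 + \<beta>2)^2 - \<beta>2^2 + (\<beta>2 + u)^2)) / (2 * u))"
  shows
    "(a \<le> 1 \<longrightarrow>
       (\<forall>r. periodic_rays r \<longrightarrow>
          (let x = (\<lambda>i. (((1 - a) * real i + (1 + b)) * 2 ^ i - b) * lam) in
            optimal_strategy \<alpha>1 \<beta>1 \<alpha>2 \<beta>2 lam x r \<and>
            comp_ratio \<alpha>1 \<beta>1 \<alpha>2 \<beta>2 lam x r = ereal (5 * \<alpha>1 + 4 * \<alpha>2))))
     \<and>
     (a \<ge> 1 \<longrightarrow>
       (\<forall>r. periodic_rays r \<longrightarrow>
          (let x = (\<lambda>i. ((1 + b) * \<Phi> ^ i - b) * lam) in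
            optimal_strategy \<alpha>1 \<beta>1 \<alpha>2 \<beta>2 lam x r \<and>
            comp_ratio \<alpha>1 \<beta>1 \<alpha>2 \<beta>2 lam x r =
              ereal (((\<alpha>1 + \<alpha>2) * x 1 + (\<beta>1 + \<beta>2) + (\<alpha>1 * lam + \<beta>1)) / lam))))"
proof -
  note nn = assms(1,2,4,5)
  have Ap: "\<alpha>1 + \<alpha>2 > 0" and lam: "lam > 0" using assms by auto
  have up: "u > 0" unfolding u_def using Ap lam by simp
  have ub: "u * b = \<beta>1 + \<beta>2" unfolding b_def using up by simp
  have ua: "2 * u * a = 3 * \<beta>1 + 2 * \<beta>2" unfolding a_def using up by simp
  have bnn: "b \<ge> 0" unfolding b_def using up nn by simp
  show ?thesis
  proof (intro conjI impI allI)
    fix r assume a1: "a \<le> 1" and per: "periodic_rays r"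
    define x where "x = (\<lambda>i::nat. (((1 - a) * real i + (1 + b)) * 2 ^ i - b) * lam)"
    define R where "R = 5 * \<alpha>1 + 4 * \<alpha>2"
    have x0: "x 0 = lam" unfolding x_def by simp
    have xd: "x (Suc n) - x n = lam * 2^n * ((1 - a) * (real n + 2) + (1 + b))" for n
      unfolding x_def by (simp add: algebra_simps)
    have inc: "x n < x (Suc n)" for n
    proof -
      have "(1 - a) * (real n + 2) \<ge> 0" using a1 by simp
      then have "(1 - a) * (real n + 2) + (1 + b) > 0" using bnn by linarith
      then have "lam * 2^n * ((1 - a) * (real n + 2) + (1 + b)) > 0" using lam by simp
      then show ?thesis using xd[of n] by linarith
    qed
    have xlow: "x n \<ge> lam * (1 + real n * 1)" for n
    proof -
      have e: "1 + real n \<le> 2 ^ n"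
      proof (induction n)
        case (Suc n)
        have "(1::real) \<le> 2 ^ n" by simp
        then show ?case using Suc by simp
      qed simp
      have "(1 - a) * real n * 2 ^ n \<ge> 0" using a1 by simp
      moreover have "b * (2 ^ n - 1) \<ge> 0" using bnn e by simp
      ultimately have "1 + real n \<le> ((1 - a) * real n + (1 + b)) * 2 ^ n - b"
        using e by (simp add: algebra_simps)
      then show ?thesis unfolding x_def using lam by (simp add: mult.commute)
    qed
    have unb: "\<exists>i. x i > M" for M by (rule unb_lemma[OF xlow lam]) simp
    have F: "(\<Sum>i\<in>{1..<n+2}. (\<alpha>1 * x i + \<beta>1) + (\<alpha>2 * x i + \<beta>2)) + \<alpha>1 * x n + \<beta>1 = R * x n" for n
    proof (rule F_ind[where c="\<lambda>v. (\<alpha>1 * v + \<beta>1) + (\<alpha>2 * v + \<beta>2)"])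
      have x1: "x 1 = (4 - 2 * a + b) * lam" unfolding x_def by (simp add: algebra_simps)
      have "(\<alpha>1 + \<alpha>2) * x 1 = 4 * u - 2 * u * a + u * b" unfolding x1 u_def by (simp add: algebra_simps)
      then show "(\<alpha>1 * x 1 + \<beta>1) + (\<alpha>2 * x 1 + \<beta>2) + \<alpha>1 * x 0 + \<beta>1 = R * x 0"
        unfolding x0 R_def using ua ub unfolding u_def by (simp add: algebra_simps)
    next
      fix n
      have x2: "x (n+2) = (((1 - a) * (real n + 2) + (1 + b)) * (4 * 2 ^ n) - b) * lam"
        unfolding x_def by (simp add: algebra_simps)
      have "(\<alpha>1 + \<alpha>2) * x (n+2) + (\<beta>1 + \<beta>2) = 4 * (\<alpha>1 + \<alpha>2) * (lam * 2^n * ((1 - a) * (real n + 2) + (1 + b)))"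
        unfolding x2 using ub unfolding u_def by (simp add: algebra_simps)
      then show "(\<alpha>1 * x (n+2) + \<beta>1) + (\<alpha>2 * x (n+2) + \<beta>2) = (R - \<alpha>1) * (x (Suc n) - x n)"
        unfolding xd R_def by (simp add: algebra_simps)
    qed
    note pc = periodic_cr[OF nn lam per x0 inc unb F]
    have opt: "optimal_strategy \<alpha>1 \<beta>1 \<alpha>2 \<beta>2 lam x r"
      unfolding optimal_strategy_def
    proof (intro conjI allI impI)
      show "search_strategy x r" by (rule pc(1))
      fix x' r' assume ss': "search_strategy x' r'"
      show "comp_ratio \<alpha>1 \<beta>1 \<alpha>2 \<beta>2 lam x r \<le> comp_ratio \<alpha>1 \<beta>1 \<alpha>2 \<beta>2 lam x' r'"
        unfolding pc(2) R_def
        by (rule cr_lower[OF nn lam ss']) (rule lower_i[OF Ap lam nn(3,4)], auto)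
    qed
    show "let x = (\<lambda>i. (((1 - a) * real i + (1 + b)) * 2 ^ i - b) * lam) in
            optimal_strategy \<alpha>1 \<beta>1 \<alpha>2 \<beta>2 lam x r \<and>
            comp_ratio \<alpha>1 \<beta>1 \<alpha>2 \<beta>2 lam x r = ereal (5 * \<alpha>1 + 4 * \<alpha>2)"
      using opt pc(2) unfolding Let_def x_def R_def by simp
  next
    fix r assume a1: "a \<ge> 1" and per: "periodic_rays r"
    define s where "s = 2 * \<beta>1 + \<beta>2"
    define Dd where "Dd = (2 * \<beta>1 + \<beta>2)^2 - \<beta>2^2 + (\<beta>2 + u)^2"
    define v where "v = sqrt Dd"
    define q where "q = (s - u + v) / (2 * u)"
    define p where "p = \<beta>1 / u"
    have Phiq: "\<Phi> = 1 + inverse q" unfolding \<Phi>_def q_def v_def Dd_def s_def by simp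
    have Ddeq: "Dd = (s - u)^2 + 4 * (\<beta>1 + \<beta>2) * u" unfolding Dd_def s_def
      by (simp add: algebra_simps power2_eq_square)
    have Bge: "s + (\<beta>1 + \<beta>2) \<ge> 2 * u"
    proof -
      have "2 * u * 1 \<le> 2 * u * a" using a1 up by (intro mult_left_mono) auto
      then show ?thesis using ua unfolding s_def by simp
    qed
    have Bp: "\<beta>1 + \<beta>2 > 0" using Bge up nn unfolding s_def by linarith
    have bpos: "b > 0" unfolding b_def using Bp up by simp
    have Ddnn: "Dd \<ge> 0" unfolding Ddeq using Bp up by simp
    have vsq: "v^2 = Dd" unfolding v_def using Ddnn by simp
    have vnn: "v \<ge> 0" unfolding v_def using Ddnn by simp
    have qv: "2 * u * q = s - u + v" unfolding q_def using up by simp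
    have v3: "3 * u - s \<le> v"
    proof (cases "3 * u - s \<le> 0")
      case True then show ?thesis using vnn by simp
    next
      case False
      have "Dd - (3 * u - s)^2 = 4 * u * ((s + (\<beta>1 + \<beta>2)) - 2 * u)"
        unfolding Ddeq s_def by (simp add: algebra_simps power2_eq_square)
      also have "\<dots> \<ge> 0" using Bge up by simp
      finally have "(3 * u - s)^2 \<le> Dd" by simp
      then show ?thesis unfolding v_def by (rule real_le_rsqrt)
    qed
    have q1: "q \<ge> 1"
    proof -
      have "2 * u * 1 \<le> 2 * u * q" using qv v3 by simp
      then show ?thesis using up by simp
    qed
    have qeq: "u * q^2 - (s - u) * q - (\<beta>1 + \<beta>2) = 0"
    proof -
      have "(2 * u * q - (s - u))^2 = Dd" using qv vsq by simp
      then have "4 * u * (u * q^2 - (s - u) * q - (\<beta>1 + \<beta>2)) = 0"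
        unfolding Ddeq by (simp add: algebra_simps power2_eq_square)
      then show ?thesis using up by simp
    qed
    have P1: "\<Phi> > 1" unfolding Phiq using q1 by simp
    have P2: "\<Phi> \<le> 2" unfolding Phiq using q1 by (simp add: inverse_le_1_iff)
    have pdef: "\<beta>1 = p * ((\<alpha>1 + \<alpha>2) * lam)" unfolding p_def u_def[symmetric] using up by simp
    have bdef: "\<beta>1 + \<beta>2 = b * ((\<alpha>1 + \<alpha>2) * lam)" using ub unfolding u_def by (simp add: mult.commute)
    have up_: "u * p = \<beta>1" unfolding p_def using up by simp
    have T: "((1 + b) * \<Phi> + p) * (\<Phi> - 1) = \<Phi>^2"
    proof -
      have qp: "q > 0" using q1 by simp
      have e0: "b + (b + p - 1) * q - q^2 = 0"
      proof -
        have "u * (b + (b + p - 1) * q - q^2) = u * b + (u * b + u * p - u) * q - u * q^2"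
          by (simp add: algebra_simps)
        also have "\<dots> = 0" using qeq ub up_ unfolding s_def by (simp add: algebra_simps)
        finally show ?thesis using up by simp
      qed
      have "((1 + b) * \<Phi> + p) * (\<Phi> - 1) - \<Phi>^2 = (b + (b + p - 1) * q - q^2) / q^2"
        unfolding Phiq using qp by (simp add: field_simps power2_eq_square)
      then show ?thesis using e0 by simp
    qed
    define x where "x = (\<lambda>i::nat. ((1 + b) * \<Phi> ^ i - b) * lam)"
    define R where "R = ((\<alpha>1 + \<alpha>2) * x 1 + (\<beta>1 + \<beta>2) + (\<alpha>1 * lam + \<beta>1)) / lam"
    define TT where "TT = (1 + b) * \<Phi> + p"
    have x0: "x 0 = lam" unfolding x_def by simp
    have xd: "x (Suc n) - x n = (1 + b) * lam * \<Phi>^n * (\<Phi> - 1)" for n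
      unfolding x_def by (simp add: algebra_simps)
    have inc: "x n < x (Suc n)" for n
    proof -
      have "(1 + b) * lam * \<Phi>^n * (\<Phi> - 1) > 0" using bpos lam P1 by simp
      then show ?thesis using xd[of n] by linarith
    qed
    have xlow: "x n \<ge> lam * (1 + real n * (\<Phi> - 1))" for n
    proof -
      have e: "1 + real n * (\<Phi> - 1) \<le> \<Phi> ^ n"
        using Bernoulli_inequality[of "\<Phi> - 1" n] P1 by simp
      have "1 \<le> \<Phi> ^ n" using P1 by simp
      then have "b * (\<Phi> ^ n - 1) \<ge> 0" using bpos by simp
      then have "1 + real n * (\<Phi> - 1) \<le> (1 + b) * \<Phi> ^ n - b"
        using e by (simp add: algebra_simps)
      then show ?thesis unfolding x_def using lam by (simp add: mult.commute)
    qed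
    have unb: "\<exists>i. x i > M" for M by (rule unb_lemma[OF xlow lam]) (use P1 in simp)
    have Rl: "R * lam = (\<alpha>1 + \<alpha>2) * x 1 + (\<beta>1 + \<beta>2) + (\<alpha>1 * lam + \<beta>1)"
      unfolding R_def using lam by simp
    have RT: "R = \<alpha>1 + (\<alpha>1 + \<alpha>2) * TT"
    proof -
      have "R * lam = (\<alpha>1 + \<alpha>2) * x 1 + (\<beta>1 + \<beta>2) + (\<alpha>1 * lam + \<beta>1)" unfolding R_def using lam by simp
      also have "\<dots> = (\<alpha>1 + (\<alpha>1 + \<alpha>2) * TT) * lam"
      proof -
        have ubl: "(\<alpha>1 + \<alpha>2) * b * lam = \<beta>1 + \<beta>2" using ub unfolding u_def by (simp add: mult.commute mult.left_commute)
        have upl: "(\<alpha>1 + \<alpha>2) * p * lam = \<beta>1" using up_ unfolding u_def by (simp add: mult.commute mult.left_commute)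
        have e1: "(\<alpha>1 + \<alpha>2) * x 1 = (\<alpha>1 + \<alpha>2) * (1 + b) * \<Phi> * lam - (\<alpha>1 + \<alpha>2) * b * lam"
          unfolding x_def by (simp add: algebra_simps)
        have e2: "(\<alpha>1 + (\<alpha>1 + \<alpha>2) * TT) * lam = \<alpha>1 * lam + (\<alpha>1 + \<alpha>2) * (1 + b) * \<Phi> * lam + (\<alpha>1 + \<alpha>2) * p * lam"
          unfolding TT_def by (simp add: algebra_simps)
        show ?thesis using e1 e2 ubl upl by linarith
      qed
      finally show ?thesis using lam by simp
    qed
    have F: "(\<Sum>i\<in>{1..<n+2}. (\<alpha>1 * x i + \<beta>1) + (\<alpha>2 * x i + \<beta>2)) + \<alpha>1 * x n + \<beta>1 = R * x n" for n
    proof (rule F_ind[where c="\<lambda>v. (\<alpha>1 * v + \<beta>1) + (\<alpha>2 * v + \<beta>2)"])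
      show "(\<alpha>1 * x 1 + \<beta>1) + (\<alpha>2 * x 1 + \<beta>2) + \<alpha>1 * x 0 + \<beta>1 = R * x 0"
        unfolding x0 using Rl by (simp add: algebra_simps)
    next
      fix n
      have "(\<alpha>1 * x (n+2) + \<beta>1) + (\<alpha>2 * x (n+2) + \<beta>2) = (\<alpha>1 + \<alpha>2) * ((1 + b) * lam * \<Phi>^n * \<Phi>^2)"
        unfolding x_def using ub unfolding u_def by (simp add: algebra_simps power_add power2_eq_square)
      also have "\<dots> = (\<alpha>1 + \<alpha>2) * ((1 + b) * lam * \<Phi>^n * (TT * (\<Phi> - 1)))"
        using T unfolding TT_def by simp
      also have "\<dots> = (R - \<alpha>1) * (x (Suc n) - x n)" unfolding xd RT by (simp add: algebra_simps)
      finally show "(\<alpha>1 * x (n+2) + \<beta>1) + (\<alpha>2 * x (n+2) + \<beta>2) = (R - \<alpha>1) * (x (Suc n) - x n)" .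
    qed
    note pc = periodic_cr[OF nn lam per x0 inc unb F]
    have opt: "optimal_strategy \<alpha>1 \<beta>1 \<alpha>2 \<beta>2 lam x r"
      unfolding optimal_strategy_def
    proof (intro conjI allI impI)
      show "search_strategy x r" by (rule pc(1))
      fix x' r' assume ss': "search_strategy x' r'"
      show "comp_ratio \<alpha>1 \<beta>1 \<alpha>2 \<beta>2 lam x r \<le> comp_ratio \<alpha>1 \<beta>1 \<alpha>2 \<beta>2 lam x' r'"
        unfolding pc(2) RT TT_def
        by (rule cr_lower[OF nn lam ss']) (rule lower_ii[OF Ap lam nn(3,4) pdef bdef bpos P1 P2 T], auto)
    qed
    show "let x = (\<lambda>i. ((1 + b) * \<Phi> ^ i - b) * lam) in
            optimal_strategy \<alpha>1 \<beta>1 \<alpha>2 \<beta>2 lam x r \<and>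
            comp_ratio \<alpha>1 \<beta>1 \<alpha>2 \<beta>2 lam x r =
              ereal (((\<alpha>1 + \<alpha>2) * x 1 + (\<beta>1 + \<beta>2) + (\<alpha>1 * lam + \<beta>1)) / lam)"
      using opt pc(2) unfolding Let_def x_def R_def by simp
  qed
qed


end
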